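(* For the RHA process, let $0\le m\le n$ and let $A_{nm}$ be the event that the $2^{n-m}$ consecutive length-$2^m$ blocks $X^m_{2^{n-m}},X^m_{2^{n-m}+1},\dots,X^m_{2^{n-m+1}-1}$ composing $X^n_1$ are pairwise distinct (so $P(A_{nn})=1$). Then $P(A_{nm})=0$ if $k_m<2^{n-m}$, whereas if $k_m\ge2^{n-m}$ and $m<n$, $$P(A_{nm})=P(A_{n,m+1})\,\frac{k_m(k_m-1)\cdots(k_m-2^{n-m}+1)}{k_m^2(k_m^2-1)\cdots(k_m^2-2^{n-m-1}+1)}.$$
   Context: Random hierarchical association (RHA) process. Fix positive integers $(k_n)_{n\ge0}$ (perplexities) with $k_{n-1}\le k_n\le k_{n-1}^2$ for all $n\ge1$. On a probability space $(\Omega,\mathcal J,P)$ let, for each $n\ge1$, $(L_{nj},R_{nj})_{j=1}^{k_n}$ be the lexicographically sorted enumeration of a uniformly random $k_n$-element subset of $\{1,\dots,k_{n-1}\}^2$ (each of the $\binom{k_{n-1}^2}{k_n}$ subsets equally likely), independently over $n$. Let $(C_n)_{n\ge0}$ be independent, independent of all $(L_{nj},R_{nj})$, with $C_n$ uniform on $\{1,\dots,k_n\}$. Define strings $Y^0_j=j$ (length 1) for $1\le j\le k_0$ and $Y^n_j=Y^{n-1}_{L_{nj}}Y^{n-1}_{R_{nj}}$ (concatenation); so $Y^n_1,\dots,Y^n_{k_n}$ are distinct strings of length $2^n$. The RHA process is $\mathcal X=Y^0_{C_0}Y^1_{C_1}Y^2_{C_2}\cdots=X_1X_2X_3\cdots$,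 $X_{k:l}=X_k\cdots X_l$; for $n\ge0$, $j\ge1$, $X^n_j=X_{j2^n:(j+1)2^n-1}$ (so $X^n_1=Y^n_{C_n}$). *)

theory Defs
  imports "HOL-Probability.Probability"
begin

text \<open>Strings Y^n_j of the RHA process for a fixed outcome: S n is the random
k_n-element subset of {1..k_(n-1)}^2 at level n; (L_nj, R_nj) is the j-th
(1-based) element of its lexicographically sorted enumeration.\<close>

definition lexless :: "nat \<times> nat \<Rightarrow> nat \<times> nat \<Rightarrow> bool" where
  "lexless q p \<longleftrightarrow> fst q < fst p \<or> (fst q = fst p \<and> snd q < snd p)"

definition lexEnum :: "(nat \<times> nat) set \<Rightarrow> nat \<Rightarrow> nat \<times> nat" where
  "lexEnum A j = (THE p. p \<in> A \<and> card {q \<in> A. lexless q p} = j - 1)"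

fun rhaY :: "(nat \<Rightarrow> (nat \<times> nat) set) \<Rightarrow> nat \<Rightarrow> nat \<Rightarrow> nat list" where
  "rhaY S 0 j = [j]"
| "rhaY S (Suc n) j =
     (let p = lexEnum (S (Suc n)) j
      in rhaY S n (fst p) @ rhaY S n (snd p))"

text \<open>The process X_1 X_2 ... = Y^0_{C_0} Y^1_{C_1} ...; the symbol X_t (t \<ge> 1) lies in the
block Y^n_{C_n} with 2^n \<le> t < 2^(n+1), at offset t - 2^n.\<close>

definition rhaLevel :: "nat \<Rightarrow> nat" where
  "rhaLevel t = (THE n. 2 ^ n \<le> t \<and> t < 2 ^ Suc n)"

definition rhaX :: "(nat \<Rightarrow> (nat \<times> nat) set) \<Rightarrow> (nat \<Rightarrow> nat) \<Rightarrow> nat \<Rightarrow> nat" where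
  "rhaX S C t = rhaY S (rhaLevel t) (C (rhaLevel t)) ! (t - 2 ^ rhaLevel t)"

definition rhaBlock :: "(nat \<Rightarrow> (nat \<times> nat) set) \<Rightarrow> (nat \<Rightarrow> nat) \<Rightarrow> nat \<Rightarrow> nat \<Rightarrow> nat list" where
  "rhaBlock S C m j = map (rhaX S C) [j * 2 ^ m ..< (j + 1) * 2 ^ m]"

definition rhaA :: "'w set \<Rightarrow> (nat \<Rightarrow> 'w \<Rightarrow> (nat \<times> nat) set) \<Rightarrow> (nat \<Rightarrow> 'w \<Rightarrow> nat)
    \<Rightarrow> nat \<Rightarrow> nat \<Rightarrow> 'w set" where
  "rhaA \<Omega> S C n m = {\<omega> \<in> \<Omega>.
     inj_on (rhaBlock (\<lambda>i. S i \<omega>) (\<lambda>i. C i \<omega>) m) {2 ^ (n - m) ..< 2 ^ (n - m + 1)}}"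

text \<open>All randomness as a single family (indexed by Inl n for the subsets, n \<ge> 1,
and Inr n for the C_n) to express mutual independence.\<close>

definition rhaVars :: "(nat \<Rightarrow> 'w \<Rightarrow> (nat \<times> nat) set) \<Rightarrow> (nat \<Rightarrow> 'w \<Rightarrow> nat)
    \<Rightarrow> nat + nat \<Rightarrow> 'w \<Rightarrow> (nat \<times> nat) set + nat" where
  "rhaVars S C i \<omega> = (case i of Inl n \<Rightarrow> Inl (S n \<omega>) | Inr n \<Rightarrow> Inr (C n \<omega>))"

end

theory Submission
  imports Defs
begin

lemma lexless_trans: "lexless a b \<Longrightarrow> lexless b c \<Longrightarrow> lexless a c"
  by (auto simp: lexless_def)
lemma lexless_irrefl: "\<not> lexless a a" by (auto simp: lexless_def)
lemma lexless_total: "a \<noteq> b \<Longrightarrow> lexless a b \<or> lexless b a"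
  by (cases a; cases b) (auto simp: lexless_def)

definition rk :: "(nat \<times> nat) set \<Rightarrow> nat \<times> nat \<Rightarrow> nat" where
  "rk A p = card {q \<in> A. lexless q p}"

lemma rk_less: "finite A \<Longrightarrow> p \<in> A \<Longrightarrow> q \<in> A \<Longrightarrow> lexless q p \<Longrightarrow> rk A q < rk A p"
  unfolding rk_def
  apply (rule psubset_card_mono)
   apply simp
  using lexless_trans lexless_irrefl by blast

lemma rk_inj: "finite A \<Longrightarrow> inj_on (rk A) A"
  by (metis inj_onI lexless_total nat_neq_iff rk_less)

lemma rk_bound: "finite A \<Longrightarrow> p \<in> A \<Longrightarrow> rk A p < card A"
  unfolding rk_def
  apply (rule psubset_card_mono) apply simp using lexless_irrefl by blast

lemma rk_bij: "finite A \<Longrightarrow> bij_betw (rk A) A {..<card A}"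
  apply (rule bij_betw_imageI)
  apply (simp add: rk_inj)
  apply (rule card_subset_eq) apply simp
  using rk_bound apply blast
  by (simp add: card_image rk_inj)

lemma lexEnum_eq: assumes "finite A" "p \<in> A" shows "lexEnum A (Suc (rk A p)) = p"
  unfolding lexEnum_def
  apply (rule the_equality)
  using assms apply (simp add: rk_def)
  using assms rk_inj by (metis diff_Suc_1 inj_on_contraD rk_def)

lemma lexEnum_bij: assumes "finite A" shows "bij_betw (lexEnum A) {1..card A} A"
proof -
  have b: "bij_betw (\<lambda>p. Suc (rk A p)) A {1..card A}"
  proof -
    have "bij_betw Suc {..<card A} {1..card A}"
      by (simp add: atLeastLessThanSuc_atLeastAtMost bij_betw_Suc lessThan_atLeast0)
    thus ?thesis using rk_bij[OF assms] bij_betw_trans[of "rk A" A "{..<card A}" Suc] by (simp add: o_def)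
  qed
  have "bij_betw (the_inv_into A (\<lambda>p. Suc (rk A p))) {1..card A} A"
    by (rule bij_betw_the_inv_into[OF b])
  moreover have "\<And>j. j \<in> {1..card A} \<Longrightarrow> the_inv_into A (\<lambda>p. Suc (rk A p)) j = lexEnum A j"
  proof -
    fix j assume j: "j \<in> {1..card A}"
    then obtain p where p: "p \<in> A" "Suc (rk A p) = j" using b by (metis bij_betw_iff_bijections)
    thus "the_inv_into A (\<lambda>p. Suc (rk A p)) j = lexEnum A j"
      using lexEnum_eq[OF assms p(1)] the_inv_into_f_f[of "\<lambda>p. Suc (rk A p)" A p] b
      by (simp add: bij_betw_def)
  qed
  ultimately show ?thesis using bij_betw_cong by blast
qed

definition flat :: "(nat \<times> nat) list \<Rightarrow> nat list" where
  "flat ps = concat (map (\<lambda>p. [fst p, snd p]) ps)"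

definition exps :: "(nat \<times> nat) set \<Rightarrow> nat list \<Rightarrow> nat list" where
  "exps A J = flat (map (lexEnum A) J)"

fun pr :: "nat list \<Rightarrow> (nat \<times> nat) list" where
  "pr (a # b # xs) = (a, b) # pr xs"
| "pr _ = []"

lemma flat_simps[simp]: "flat [] = []" "flat (p # ps) = fst p # snd p # flat ps"
  by (auto simp: flat_def)

lemma pr_flat[simp]: "pr (flat ps) = ps"
  by (induction ps) auto

lemma flat_pr: "even (length xs) \<Longrightarrow> flat (pr xs) = xs"
  by (induction xs rule: pr.induct) auto

lemma length_flat[simp]: "length (flat ps) = 2 * length ps"
  by (induction ps) auto

lemma set_flat: "set (flat ps) = fst ` set ps \<union> snd ` set ps"
  by (induction ps) auto

lemma distinct_flat: "distinct (flat ps) \<Longrightarrow> distinct ps"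
  by (induction ps) (auto simp: set_flat)

lemma length_pr: "length (pr xs) = length xs div 2"
  by (induction xs rule: pr.induct) auto

lemma exps_eq_iff: "length J' = 2 * r \<Longrightarrow> exps A J = J' \<longleftrightarrow> map (lexEnum A) J = pr J'"
proof
  assume "length J' = 2 * r" "exps A J = J'"
  thus "map (lexEnum A) J = pr J'" unfolding exps_def using pr_flat by metis
next
  assume a: "length J' = 2 * r" "map (lexEnum A) J = pr J'"
  have "even (length J')" using a(1) by simp
  thus "exps A J = J'" unfolding exps_def a(2) by (rule flat_pr)
qed

definition IL :: "nat \<Rightarrow> nat \<Rightarrow> nat list set" where
  "IL k L = {J. length J = L \<and> distinct J \<and> set J \<subseteq> {1..k}}"

lemma finite_IL: "finite (IL k L)"
proof -
  have "IL k L \<subseteq> {J. set J \<subseteq> {1..k} \<and> length J = L}" by (auto simp: IL_def)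
  thus ?thesis using finite_lists_length_eq[of "{1..k}" L] finite_subset by auto
qed

lemma count_preimage:
  assumes fin: "finite S" and K: "card S = K" and ps: "distinct ps"
  shows "card {J \<in> IL K (length ps). map (lexEnum S) J = ps} = (if set ps \<subseteq> S then 1 else 0)"
proof -
  have bij: "bij_betw (lexEnum S) {1..K} S" using lexEnum_bij[OF fin] K by simp
  show ?thesis
  proof (cases "set ps \<subseteq> S")
    case False
    have "{J \<in> IL K (length ps). map (lexEnum S) J = ps} = {}"
    proof (rule ccontr)
      assume "{J \<in> IL K (length ps). map (lexEnum S) J = ps} \<noteq> {}"
      then obtain J where J: "J \<in> IL K (length ps)" "map (lexEnum S) J = ps" by blast
      hence "set ps = lexEnum S ` set J" "set J \<subseteq> {1..K}" by (auto simp: IL_def)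
      hence "set ps \<subseteq> S" using bij by (auto simp: bij_betw_def)
      thus False using False by simp
    qed
    thus ?thesis using False by (metis card.empty)
  next
    case True
    define g where "g = the_inv_into {1..K} (lexEnum S)"
    define J0 where "J0 = map g ps"
    have gb: "bij_betw g S {1..K}" unfolding g_def by (rule bij_betw_the_inv_into[OF bij])
    have eq: "{J \<in> IL K (length ps). map (lexEnum S) J = ps} = {J0}"
    proof (intro equalityI subsetI)
      fix J assume "J \<in> {J \<in> IL K (length ps). map (lexEnum S) J = ps}"
      hence J: "set J \<subseteq> {1..K}" "map (lexEnum S) J = ps" by (auto simp: IL_def)
      have "J0 = map (g \<circ> lexEnum S) J" unfolding J0_def using J(2) by auto
      also have "\<dots> = J"
        apply (rule map_idI)
        using J(1) bij unfolding g_def by (auto simp: bij_betw_def the_inv_into_f_f)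
      finally show "J \<in> {J0}" by simp
    next
      fix J assume "J \<in> {J0}"
      hence J: "J = J0" by simp
      have "set J0 \<subseteq> {1..K}" unfolding J0_def using True gb by (auto simp: bij_betw_def)
      moreover have "distinct J0" unfolding J0_def
        using ps True gb by (meson distinct_map bij_betw_def inj_on_subset)
      moreover have "map (lexEnum S) J0 = ps" unfolding J0_def
        apply (simp add: map_idI)
        apply (rule map_idI)
        using True bij unfolding g_def by (auto simp: bij_betw_def f_the_inv_into_f)
      ultimately show "J \<in> {J \<in> IL K (length ps). map (lexEnum S) J = ps}"
        using J by (auto simp: IL_def J0_def)
    qed
    show ?thesis using True eq by simp
  qed
qed

definition ff :: "nat \<Rightarrow> nat \<Rightarrow> real" where
  "ff x r = (\<Prod>i<r. real x - real i)"

lemma ff_choose: "ff x r = fact r * real (x choose r)"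
proof -
  have "real (x choose r) = (\<Prod>i=0..<r. real x - of_nat i) / fact r"
    by (simp add: binomial_gbinomial gbinomial_prod_rev)
  thus ?thesis unfolding ff_def by (simp add: lessThan_atLeast0)
qed

lemma ff_zero: "x < r \<Longrightarrow> ff x r = 0"
  unfolding ff_choose by simp

lemma ff_pos: "r \<le> x \<Longrightarrow> ff x r > 0"
  unfolding ff_choose by simp

definition Sb :: "nat \<Rightarrow> nat \<Rightarrow> (nat \<times> nat) set set" where
  "Sb k' K = {A. A \<subseteq> {1..k'} \<times> {1..k'} \<and> card A = K}"

lemma finite_Sb: "finite (Sb k' K)"
  unfolding Sb_def by (rule finite_subset[of _ "Pow ({1..k'} \<times> {1..k'})"]) auto

lemma card_Sb: "card (Sb k' K) = (k'^2) choose K"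
proof -
  have "card (Sb k' K) = card ({1..k'} \<times> {1..k'}) choose K"
    unfolding Sb_def by (rule n_subsets) simp
  thus ?thesis by (simp add: power2_eq_square)
qed

lemma Sb_nonempty: "K \<le> k'^2 \<Longrightarrow> Sb k' K \<noteq> {}"
  using card_Sb[of k' K] by (metis card.empty zero_less_binomial_iff not_gr0 finite_Sb)

lemma card_contain:
  assumes fin: "finite U" and R: "R \<subseteq> U" "card R = r" "r \<le> K"
  shows "card {A. A \<subseteq> U \<and> card A = K \<and> R \<subseteq> A} = (card U - r) choose (K - r)"
proof -
  have fR: "finite R" using R fin finite_subset by blast
  have "card {B. B \<subseteq> U - R \<and> card B = K - r} = card (U - R) choose (K - r)"
    by (rule n_subsets) (use fin in auto)
  moreover have "card (U - R) = card U - r" using R fR by (simp add: card_Diff_subset)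
  moreover have "card ((\<lambda>B. B \<union> R) ` {B. B \<subseteq> U - R \<and> card B = K - r}) = card {B. B \<subseteq> U - R \<and> card B = K - r}"
    by (rule card_image) (auto simp: inj_on_def)
  moreover have "(\<lambda>B. B \<union> R) ` {B. B \<subseteq> U - R \<and> card B = K - r} = {A. A \<subseteq> U \<and> card A = K \<and> R \<subseteq> A}"
  proof (intro equalityI subsetI)
    fix A assume "A \<in> (\<lambda>B. B \<union> R) ` {B. B \<subseteq> U - R \<and> card B = K - r}"
    then obtain B where B: "B \<subseteq> U - R" "card B = K - r" "A = B \<union> R" by auto
    have "finite B" using B fin finite_subset by blast
    have "B \<inter> R = {}" using B by blast
    hence "card A = K - r + r" using B R fR \<open>finite B\<close> card_Un_disjoint[of B R] by simp
    thus "A \<in> {A. A \<subseteq> U \<and> card A = K \<and> R \<subseteq> A}" using B R by auto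
  next
    fix A assume A: "A \<in> {A. A \<subseteq> U \<and> card A = K \<and> R \<subseteq> A}"
    have "finite A" using A fin finite_subset by blast
    hence "card (A - R) = K - r" using A R by (simp add: card_Diff_subset fR)
    moreover have "A = (A - R) \<union> R" using A by auto
    ultimately show "A \<in> (\<lambda>B. B \<union> R) ` {B. B \<subseteq> U - R \<and> card B = K - r}" using A by blast
  qed
  ultimately show ?thesis by simp
qed

lemma card_contain0:
  assumes fin: "finite U" and R: "R \<subseteq> U" "card R = r" "K < r"
  shows "card {A. A \<subseteq> U \<and> card A = K \<and> R \<subseteq> A} = 0"
proof -
  have "{A. A \<subseteq> U \<and> card A = K \<and> R \<subseteq> A} = {}"
    using R fin by (auto dest: card_mono[OF finite_subset[OF _ fin]])
  thus ?thesis by (simp only: card.empty)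
qed

lemma set_pr_sub: "even (length xs) \<Longrightarrow> set xs \<subseteq> B \<Longrightarrow> set (pr xs) \<subseteq> B \<times> B"
  using set_flat[of "pr xs"] flat_pr[of xs] by auto

lemma comb:
  assumes J': "J' \<in> IL k' (2 * r)" and K: "K \<le> k'^2"
  shows "(\<Sum>J\<in>IL K r. measure_pmf.prob (pmf_of_set (Sb k' K)) {A. exps A J = J'})
         = ff K r / ff (k'^2) r"
proof -
  let ?Sb = "Sb k' K"
  let ?U = "{1..k'} \<times> {1..k'}"
  define R where "R = set (pr J')"
  have lJ: "length J' = 2 * r" and dJ: "distinct J'" and sJ: "set J' \<subseteq> {1..k'}"
    using J' by (auto simp: IL_def)
  have ev: "even (length J')" using lJ by simp
  have dpr: "distinct (pr J')" using dJ flat_pr[OF ev] distinct_flat by metis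
  have lpr: "length (pr J') = r" using lJ by (simp add: length_pr)
  have RU: "R \<subseteq> ?U" unfolding R_def using set_pr_sub[OF ev sJ] .
  have cR: "card R = r" unfolding R_def using dpr lpr by (simp add: distinct_card)
  have cU: "card ?U = k'^2" by (simp add: power2_eq_square)
  have rN: "r \<le> k'^2" using card_mono[OF _ RU] cR cU by simp
  have ne: "?Sb \<noteq> {}" using Sb_nonempty[OF K] .
  have fS: "finite ?Sb" by (rule finite_Sb)
  have "(\<Sum>J\<in>IL K r. measure_pmf.prob (pmf_of_set ?Sb) {A. exps A J = J'})
      = (\<Sum>J\<in>IL K r. real (card (?Sb \<inter> {A. exps A J = J'})) / card ?Sb)"
    using ne fS by (simp add: measure_pmf_of_set)
  also have "\<dots> = (\<Sum>J\<in>IL K r. \<Sum>A\<in>?Sb. of_bool (exps A J = J')) / card ?Sb"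
  proof -
    have "\<And>J. real (card (?Sb \<inter> {A. exps A J = J'})) = (\<Sum>A\<in>?Sb. of_bool (exps A J = J'))"
      using fS by (simp add: Int_def)
    thus ?thesis by (simp only: sum_divide_distrib)
  qed
  also have "(\<Sum>J\<in>IL K r. \<Sum>A\<in>?Sb. of_bool (exps A J = J') :: real)
      = (\<Sum>A\<in>?Sb. \<Sum>J\<in>IL K r. of_bool (exps A J = J'))"
    by (rule sum.swap)
  also have "\<dots> = (\<Sum>A\<in>?Sb. of_bool (R \<subseteq> A))"
  proof (rule sum.cong[OF refl])
    fix A assume A: "A \<in> ?Sb"
    have fA: "finite A" using A finite_subset[of A ?U] by (auto simp: Sb_def)
    have "(\<Sum>J\<in>IL K r. of_bool (exps A J = J') :: real) = real (card {J \<in> IL K r. exps A J = J'})"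
      by (simp add: Int_def finite_IL)
    also have "{J \<in> IL K r. exps A J = J'} = {J \<in> IL K (length (pr J')). map (lexEnum A) J = pr J'}"
      using exps_eq_iff[OF lJ] lpr by auto
    also have "card \<dots> = (if set (pr J') \<subseteq> A then 1 else 0)"
      by (rule count_preimage[OF fA _ dpr]) (use A in \<open>auto simp: Sb_def\<close>)
    finally show "(\<Sum>J\<in>IL K r. of_bool (exps A J = J') :: real) = of_bool (R \<subseteq> A)"
      by (simp add: R_def)
  qed
  also have "\<dots> = real (card {A \<in> ?Sb. R \<subseteq> A})"
    by (simp add: Int_def fS)
  also have "{A \<in> ?Sb. R \<subseteq> A} = {A. A \<subseteq> ?U \<and> card A = K \<and> R \<subseteq> A}"
    by (auto simp: Sb_def)
  finally have eq: "(\<Sum>J\<in>IL K r. measure_pmf.prob (pmf_of_set ?Sb) {A. exps A J = J'})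
      = real (card {A. A \<subseteq> ?U \<and> card A = K \<and> R \<subseteq> A}) / real (k'^2 choose K)"
    by (simp add: card_Sb)
  show ?thesis
  proof (cases "r \<le> K")
    case True
    have c: "card {A. A \<subseteq> ?U \<and> card A = K \<and> R \<subseteq> A} = (k'^2 - r) choose (K - r)"
      using card_contain[OF _ RU cR True] cU by simp
    have cm: "(k'^2 choose K) * (K choose r) = (k'^2 choose r) * ((k'^2 - r) choose (K - r))"
      by (rule choose_mult[OF True K])
    have p1: "real (k'^2 choose K) > 0" using K by simp
    have p2: "real (k'^2 choose r) > 0" using rN by simp
    have "real ((k'^2 - r) choose (K - r)) / real (k'^2 choose K) = real (K choose r) / real (k'^2 choose r)"
    proof -
      have "real (k'^2 choose K) * real (K choose r) = real (k'^2 choose r) * real ((k'^2 - r) choose (K - r))"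
        using cm by (metis of_nat_mult)
      thus ?thesis using p1 p2 by (simp add: divide_simps) (simp add: algebra_simps)
    qed
    thus ?thesis using eq c by (simp add: ff_choose)
  next
    case False
    have c: "card {A. A \<subseteq> ?U \<and> card A = K \<and> R \<subseteq> A} = 0"
      by (rule card_contain0[OF _ RU cR]) (use False in auto)
    show ?thesis using eq c False by (simp add: ff_zero)
  qed
qed

lemma card_IL: "real (card (IL k L)) = ff k L"
proof (cases "L \<le> k")
  case True
  have "card (IL k L) = \<Prod>{k - L + 1 .. k}"
    using card_lists_distinct_length_eq[of "{1..k}" L] True by (simp add: IL_def)
  also have "\<Prod>{k - L + 1 .. k} = (\<Prod>i<L. k - i)"
    using True
  proof (induction L)
    case 0 then show ?case by simp
  next
    case (Suc L)
    have "{k - Suc L + 1..k} = insert (k - L) {k - L + 1..k}" using Suc.prems by auto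
    hence "\<Prod>{k - Suc L + 1..k} = (k - L) * \<Prod>{k - L + 1..k}" by simp
    thus ?case using Suc by (simp add: mult.commute)
  qed
  finally show ?thesis unfolding ff_def using True by (simp add: of_nat_prod of_nat_diff)
next
  case False
  have "IL k L = {}"
  proof (rule ccontr)
    assume "IL k L \<noteq> {}"
    then obtain J where J: "length J = L" "distinct J" "set J \<subseteq> {1..k}" by (auto simp: IL_def)
    hence "L \<le> card {1..k}" using card_mono[of "{1..k}" "set J"] distinct_card[of J] by simp
    thus False using False by simp
  qed
  thus ?thesis using False by (simp add: ff_zero)
qed

fun JJ :: "nat \<Rightarrow> (nat \<Rightarrow> (nat \<times> nat) set) \<Rightarrow> nat \<Rightarrow> nat \<Rightarrow> nat list" where
  "JJ n f c 0 = [c]"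
| "JJ n f c (Suc d) = exps (f (n - d)) (JJ n f c d)"

lemma JJ_cong: "d \<le> n \<Longrightarrow> (\<And>i. n - d < i \<Longrightarrow> i \<le> n \<Longrightarrow> f i = g i) \<Longrightarrow> JJ n f c d = JJ n g c d"
proof (induction d)
  case 0 then show ?case by simp
next
  case (Suc d)
  have "JJ n f c d = JJ n g c d" using Suc by auto
  moreover have "f (n - d) = g (n - d)" using Suc.prems by auto
  ultimately show ?case by simp
qed

lemma distinct_exps: "distinct (exps A J) \<Longrightarrow> distinct J"
  unfolding exps_def using distinct_flat distinct_map by blast

lemma exps_props:
  assumes "A \<in> Sb k' K" "set J \<subseteq> {1..K}"
  shows "length (exps A J) = 2 * length J \<and> set (exps A J) \<subseteq> {1..k'}"
proof -
  have fA: "finite A" using assms(1) finite_subset[of A "{1..k'} \<times> {1..k'}"] by (auto simp: Sb_def)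
  have "lexEnum A ` {1..card A} = A" using lexEnum_bij[OF fA] by (simp add: bij_betw_def)
  hence "lexEnum A ` set J \<subseteq> A" using assms by (auto simp: Sb_def)
  hence "lexEnum A ` set J \<subseteq> {1..k'} \<times> {1..k'}" using assms(1) by (auto simp: Sb_def)
  thus ?thesis unfolding exps_def by (auto simp: set_flat)
qed

context
  fixes n :: nat and k :: "nat \<Rightarrow> nat"
  assumes k_pos: "\<And>l. k l > 0"
    and k_sq: "\<And>l. l \<ge> 1 \<Longrightarrow> k l \<le> k (l - 1) ^ 2"
begin

definition PP :: "nat \<Rightarrow> (nat \<times> nat) set pmf" where
  "PP l = pmf_of_set (Sb (k (l - 1)) (k l))"

definition QQ :: "((nat \<Rightarrow> (nat \<times> nat) set) \<times> nat) pmf" where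
  "QQ = pair_pmf (Pi_pmf {1..n} {} PP) (pmf_of_set {1..k n})"

definition DD :: "nat \<Rightarrow> nat list pmf" where
  "DD d = map_pmf (\<lambda>(f, c). JJ n f c d) QQ"

definition LL :: "nat \<Rightarrow> nat list set" where
  "LL d = {J. length J = 2 ^ d \<and> set J \<subseteq> {1..k (n - d)}}"

lemma finite_LL: "finite (LL d)"
  unfolding LL_def using finite_lists_length_eq[of "{1..k (n - d)}" "2 ^ d"]
  by (simp add: conj_commute)

lemma set_PP: "1 \<le> l \<Longrightarrow> set_pmf (PP l) = Sb (k (l - 1)) (k l)"
  unfolding PP_def using Sb_nonempty[OF k_sq] finite_Sb by simp

lemma DD_0: "DD 0 = map_pmf (\<lambda>c. [c]) (pmf_of_set {1..k n})"
  unfolding DD_def QQ_def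
  by (simp add: map_pmf_def pair_pmf_def bind_assoc_pmf bind_return_pmf bind_pmf_const)

lemma DD_Suc:
  assumes "d < n"
  shows "DD (Suc d) = bind_pmf (DD d) (\<lambda>J. map_pmf (\<lambda>A. exps A J) (PP (n - d)))"
proof -
  define l where "l = n - d"
  have l: "l \<in> {1..n}" using assms by (auto simp: l_def)
  define B where "B = {1..n} - {l}"
  have ins: "{1..n} = insert l B" "l \<notin> B" "finite B" using l by (auto simp: B_def)
  let ?R = "Pi_pmf B {} PP"
  let ?U = "pmf_of_set {1..k n}"
  have Pi: "Pi_pmf {1..n} {} PP = map_pmf (\<lambda>(y,f). f(l:=y)) (pair_pmf (PP l) ?R)"
    unfolding ins(1) by (rule Pi_pmf_insert[OF ins(3,2)])
  have J1: "\<And>f y c. JJ n (f(l:=y)) c d = JJ n f c d"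
    by (rule JJ_cong) (use assms in \<open>auto simp: l_def\<close>)
  have J2: "\<And>f y c. JJ n (f(l:=y)) c (Suc d) = exps y (JJ n f c d)"
    using J1 by (simp add: l_def)
  have "DD (Suc d) = bind_pmf (PP l) (\<lambda>y. bind_pmf ?R (\<lambda>f. bind_pmf ?U (\<lambda>c. return_pmf (exps y (JJ n f c d)))))"
    unfolding DD_def QQ_def Pi
    by (simp add: map_pmf_def pair_pmf_def bind_assoc_pmf bind_return_pmf J2 del: JJ.simps)
  also have "\<dots> = bind_pmf ?R (\<lambda>f. bind_pmf (PP l) (\<lambda>y. bind_pmf ?U (\<lambda>c. return_pmf (exps y (JJ n f c d)))))"
    by (rule bind_commute_pmf)
  also have "\<dots> = bind_pmf ?R (\<lambda>f. bind_pmf ?U (\<lambda>c. bind_pmf (PP l) (\<lambda>y. return_pmf (exps y (JJ n f c d)))))"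
    by (simp only: bind_commute_pmf[of "PP l" ?U])
  finally have L: "DD (Suc d) = \<dots>" .
  have DDd: "DD d = bind_pmf ?R (\<lambda>f. bind_pmf ?U (\<lambda>c. return_pmf (JJ n f c d)))"
    unfolding DD_def QQ_def Pi
    by (simp add: map_pmf_def pair_pmf_def bind_assoc_pmf bind_return_pmf J1 bind_pmf_const del: JJ.simps)
  show ?thesis unfolding L DDd
    by (simp add: map_pmf_def bind_assoc_pmf bind_return_pmf l_def del: JJ.simps)
qed

lemma set_DD: "d \<le> n \<Longrightarrow> set_pmf (DD d) \<subseteq> LL d"
proof (induction d)
  case 0
  have "{1..k n} \<noteq> {}" using k_pos[of n] by simp
  then show ?case by (auto simp: DD_0 LL_def)
next
  case (Suc d)
  have IH: "set_pmf (DD d) \<subseteq> LL d" using Suc by simp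
  have l1: "1 \<le> n - d" using Suc.prems by simp
  have e: "n - d - 1 = n - Suc d" by simp
  show ?case
  proof
    fix J' assume "J' \<in> set_pmf (DD (Suc d))"
    then obtain J A where J: "J \<in> set_pmf (DD d)" and A: "A \<in> set_pmf (PP (n - d))" and J': "J' = exps A J"
      unfolding DD_Suc[OF Suc_le_lessD[OF Suc.prems]] by auto
    have JL: "J \<in> LL d" using J IH by auto
    have "A \<in> Sb (k (n - Suc d)) (k (n - d))" using A set_PP[OF l1] e by simp
    hence "length (exps A J) = 2 * length J \<and> set (exps A J) \<subseteq> {1..k (n - Suc d)}"
      using JL by (intro exps_props) (auto simp: LL_def)
    thus "J' \<in> LL (Suc d)" using J' JL by (simp add: LL_def)
  qed
qed

lemma pmf_DD_Suc:
  assumes d: "d < n" and J': "J' \<in> IL (k (n - Suc d)) (2 ^ Suc d)"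
    and b: "\<And>J. J \<in> IL (k (n - d)) (2 ^ d) \<Longrightarrow> pmf (DD d) J = b"
  shows "pmf (DD (Suc d)) J' = b * (ff (k (n - d)) (2 ^ d) / ff (k (n - Suc d) ^ 2) (2 ^ d))"
proof -
  let ?l = "n - d"
  let ?g = "\<lambda>J. measure_pmf.prob (PP ?l) {A. exps A J = J'}"
  have dJ': "distinct J'" using J' by (simp add: IL_def)
  have pm: "\<And>J. pmf (map_pmf (\<lambda>A. exps A J) (PP ?l)) J' = ?g J"
    by (simp add: pmf_map vimage_def)
  have "pmf (DD (Suc d)) J' = (\<integral>J. pmf (map_pmf (\<lambda>A. exps A J) (PP ?l)) J' \<partial>measure_pmf (DD d))"
    unfolding DD_Suc[OF d] by (rule pmf_bind)
  also have "\<dots> = (\<Sum>J\<in>LL d. pmf (map_pmf (\<lambda>A. exps A J) (PP ?l)) J' * pmf (DD d) J)"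
    by (rule integral_measure_pmf_real[OF finite_LL]) (use set_DD[of d] d in auto)
  also have "\<dots> = (\<Sum>J\<in>IL (k ?l) (2 ^ d). ?g J * b)"
  proof (rule sum.mono_neutral_cong_right[OF finite_LL])
    show "IL (k ?l) (2 ^ d) \<subseteq> LL d" by (auto simp: IL_def LL_def)
    show "\<forall>J\<in>LL d - IL (k ?l) (2 ^ d). pmf (map_pmf (\<lambda>A. exps A J) (PP ?l)) J' * pmf (DD d) J = 0"
    proof
      fix J assume "J \<in> LL d - IL (k ?l) (2 ^ d)"
      hence "\<not> distinct J" by (auto simp: IL_def LL_def)
      hence "{A. exps A J = J'} = {}" using dJ' distinct_exps by blast
      thus "pmf (map_pmf (\<lambda>A. exps A J) (PP ?l)) J' * pmf (DD d) J = 0" using pm by simp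
    qed
    show "\<And>J. J \<in> IL (k ?l) (2 ^ d) \<Longrightarrow> pmf (map_pmf (\<lambda>A. exps A J) (PP ?l)) J' * pmf (DD d) J = ?g J * b"
      using pm b by simp
  qed
  also have "\<dots> = b * (\<Sum>J\<in>IL (k ?l) (2 ^ d). ?g J)"
    by (simp add: sum_distrib_left mult.commute)
  also have "(\<Sum>J\<in>IL (k ?l) (2 ^ d). ?g J) = ff (k ?l) (2 ^ d) / ff (k (?l - 1) ^ 2) (2 ^ d)"
    unfolding PP_def
    by (rule comb) (use J' k_sq[of ?l] d in \<open>auto simp: IL_def\<close>)
  finally show ?thesis by (simp add: Suc_diff_Suc[symmetric])
qed

fun bb :: "nat \<Rightarrow> real" where
  "bb 0 = 1 / real (k n)"
| "bb (Suc d) = bb d * (ff (k (n - d)) (2 ^ d) / ff (k (n - Suc d) ^ 2) (2 ^ d))"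

lemma pmf_DD: "d \<le> n \<Longrightarrow> J \<in> IL (k (n - d)) (2 ^ d) \<Longrightarrow> pmf (DD d) J = bb d"
proof (induction d arbitrary: J)
  case 0
  then obtain c where c: "J = [c]" "c \<in> {1..k n}"
    by (auto simp: IL_def length_Suc_conv)
  have ne: "{1..k n} \<noteq> {}" using k_pos[of n] by simp
  have "pmf (DD 0) J = measure_pmf.prob (pmf_of_set {1..k n}) {c}"
    unfolding DD_0 c by (simp add: pmf_map vimage_def)
  also have "\<dots> = 1 / real (k n)" using ne c by (simp add: measure_pmf_of_set)
  finally show ?case by simp
next
  case (Suc d)
  show ?case using pmf_DD_Suc[of d J "bb d"] Suc by simp
qed

lemma prob_distinct:
  assumes "d \<le> n"
  shows "measure_pmf.prob (DD d) {J. distinct J} = bb d * ff (k (n - d)) (2 ^ d)"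
proof -
  have "measure_pmf.prob (DD d) {J. distinct J} = measure_pmf.prob (DD d) ({J. distinct J} \<inter> set_pmf (DD d))"
    by (simp add: measure_Int_set_pmf)
  also have "{J. distinct J} \<inter> set_pmf (DD d) = IL (k (n - d)) (2 ^ d) \<inter> set_pmf (DD d)"
    using set_DD[OF assms] by (auto simp: IL_def LL_def)
  also have "measure_pmf.prob (DD d) \<dots> = measure_pmf.prob (DD d) (IL (k (n - d)) (2 ^ d))"
    by (simp add: measure_Int_set_pmf)
  also have "\<dots> = (\<Sum>J\<in>IL (k (n - d)) (2 ^ d). pmf (DD d) J)"
    by (rule measure_measure_pmf_finite[OF finite_IL])
  also have "\<dots> = real (card (IL (k (n - d)) (2 ^ d))) * bb d"
    using pmf_DD[OF assms] by simp
  finally show ?thesis by (simp add: card_IL)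
qed

end

lemma length_rhaY[simp]: "length (rhaY S l j) = 2 ^ l"
  by (induction l arbitrary: j) (auto simp: Let_def)

lemma concat_rhaY: "concat (map (rhaY S (Suc l)) J) = concat (map (rhaY S l) (exps (S (Suc l)) J))"
  by (induction J) (auto simp: exps_def Let_def)

lemma rhaY_JJ: "d \<le> n \<Longrightarrow> rhaY S n c = concat (map (rhaY S (n - d)) (JJ n S c d))"
proof (induction d)
  case 0 then show ?case by simp
next
  case (Suc d)
  have e: "n - d = Suc (n - Suc d)" using Suc.prems by simp
  have "rhaY S n c = concat (map (rhaY S (n - d)) (JJ n S c d))" using Suc by simp
  also have "\<dots> = concat (map (rhaY S (n - Suc d)) (exps (S (n - d)) (JJ n S c d)))"
    unfolding e by (rule concat_rhaY)
  finally show ?case by simp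
qed

lemma length_exps[simp]: "length (exps A J) = 2 * length J"
  by (simp add: exps_def)

lemma length_JJ[simp]: "length (JJ n S c d) = 2 ^ d"
  by (induction d) auto

lemma nth_concat_const:
  "(\<forall>x\<in>set L. length x = b) \<Longrightarrow> i < length L \<Longrightarrow> s < b \<Longrightarrow> concat L ! (i * b + s) = (L ! i) ! s"
proof (induction L arbitrary: i)
  case Nil then show ?case by simp
next
  case (Cons x L)
  show ?case
  proof (cases i)
    case 0 then show ?thesis using Cons.prems by (simp add: nth_append)
  next
    case (Suc i')
    have lx: "length x = b" using Cons.prems by simp
    have "i * b + s = length x + (i' * b + s)" using Suc lx by simp
    hence "concat (x # L) ! (i * b + s) = concat L ! (i' * b + s)"
      by (metis concat.simps(2) nth_append_length_plus)
    then show ?thesis using Cons Suc by simp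
  qed
qed

lemma rhaLevel_eq: assumes a: "2 ^ n \<le> t" "t < 2 ^ Suc n" shows "rhaLevel t = n"
  unfolding rhaLevel_def
proof (rule the_equality)
  show "2 ^ n \<le> t \<and> t < 2 ^ Suc n" using a by blast
  fix n' assume b: "2 ^ n' \<le> t \<and> t < 2 ^ Suc n'"
  have l1: "(2::nat) ^ n < 2 ^ Suc n'" using a(1) b by (meson le_less_trans)
  have l2: "(2::nat) ^ n' < 2 ^ Suc n" using a(2) b by (meson le_less_trans)
  have "n < Suc n'" using l1 by (meson one_less_numeral_iff power_less_imp_less_exp semiring_norm(76))
  moreover have "n' < Suc n" using l2 by (meson one_less_numeral_iff power_less_imp_less_exp semiring_norm(76))
  ultimately show "n' = n" by linarith
qed

lemma rhaBlock_eq: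
  assumes mn: "m \<le> n" and j: "2 ^ (n - m) \<le> j" "j < 2 ^ (n - m + 1)"
  shows "rhaBlock S C m j = rhaY S m (JJ n S (C n) (n - m) ! (j - 2 ^ (n - m)))"
proof -
  let ?a = "n - m"
  let ?i = "j - 2 ^ ?a"
  let ?J = "JJ n S (C n) ?a"
  have pn: "(2::nat) ^ ?a * 2 ^ m = 2 ^ n" using mn by (simp add: power_add[symmetric])
  have i: "?i < 2 ^ ?a" using j by simp
  show ?thesis
  proof (rule nth_equalityI)
    show "length (rhaBlock S C m j) = length (rhaY S m (?J ! ?i))"
      by (simp add: rhaBlock_def algebra_simps)
    fix s assume "s < length (rhaBlock S C m j)"
    hence s: "s < 2 ^ m" by (simp add: rhaBlock_def algebra_simps)
    let ?t = "j * 2 ^ m + s"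
    have "rhaBlock S C m j ! s = rhaX S C ?t"
      using s by (simp add: rhaBlock_def algebra_simps)
    have t1: "2 ^ n \<le> ?t" using j pn by (metis mult_le_mono1 trans_le_add1)
    have "j * 2 ^ m + s < (j + 1) * 2 ^ m" using s by simp
    also have "(j + 1) * 2 ^ m \<le> 2 ^ (?a + 1) * 2 ^ m" using j by (intro mult_le_mono1) simp
    also have "\<dots> = 2 ^ Suc n" using pn by simp
    finally have t2: "?t < 2 ^ Suc n" .
    have lev: "rhaLevel ?t = n" by (rule rhaLevel_eq[OF t1 t2])
    have ge: "j * 2 ^ m \<ge> 2 ^ n" using j pn by (metis mult_le_mono1)
    have "?i * 2 ^ m = j * 2 ^ m - 2 ^ n" using pn by (simp add: diff_mult_distrib)
    hence "?t - 2 ^ n = ?i * 2 ^ m + s" using ge by simp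
    hence "rhaX S C ?t = rhaY S n (C n) ! (?i * 2 ^ m + s)" by (simp add: rhaX_def lev)
    also have "\<dots> = concat (map (rhaY S m) ?J) ! (?i * 2 ^ m + s)"
      using rhaY_JJ[of "?a" n S "C n"] mn by simp
    also have "\<dots> = (map (rhaY S m) ?J ! ?i) ! s"
      by (rule nth_concat_const) (use i s in auto)
    finally show "rhaBlock S C m j ! s = rhaY S m (?J ! ?i) ! s"
      using i s by (simp add: rhaBlock_def algebra_simps)
  qed
qed

definition good :: "(nat \<Rightarrow> nat) \<Rightarrow> nat \<Rightarrow> (nat \<Rightarrow> (nat \<times> nat) set) \<Rightarrow> bool" where
  "good k n S \<longleftrightarrow> (\<forall>l\<in>{1..n}. S l \<in> Sb (k (l - 1)) (k l))"

lemma lexEnum_in: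
  assumes "A \<in> Sb k' K" "j \<in> {1..K}"
  shows "lexEnum A j \<in> A" "lexEnum A j \<in> {1..k'} \<times> {1..k'}"
proof -
  have fA: "finite A" using assms(1) finite_subset[of A "{1..k'} \<times> {1..k'}"] by (auto simp: Sb_def)
  have "lexEnum A ` {1..card A} = A" using lexEnum_bij[OF fA] by (simp add: bij_betw_def)
  thus "lexEnum A j \<in> A" using assms by (auto simp: Sb_def)
  thus "lexEnum A j \<in> {1..k'} \<times> {1..k'}" using assms by (auto simp: Sb_def)
qed

lemma Y_inj: "l \<le> n \<Longrightarrow> good k n S \<Longrightarrow> inj_on (rhaY S l) {1..k l}"
proof (induction l)
  case 0 then show ?case by (auto simp: inj_on_def)
next
  case (Suc l)
  have A: "S (Suc l) \<in> Sb (k l) (k (Suc l))"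
    using Suc.prems(2)[unfolded good_def, rule_format, of "Suc l"] Suc.prems(1) by simp
  have fA: "finite (S (Suc l))" using A finite_subset[of "S (Suc l)" "{1..k l} \<times> {1..k l}"] by (auto simp: Sb_def)
  have bij: "bij_betw (lexEnum (S (Suc l))) {1..k (Suc l)} (S (Suc l))"
    using lexEnum_bij[OF fA] A by (simp add: Sb_def)
  have IH: "inj_on (rhaY S l) {1..k l}" using Suc by simp
  show ?case
  proof (rule inj_onI)
    fix x y assume x: "x \<in> {1..k (Suc l)}" and y: "y \<in> {1..k (Suc l)}" and e: "rhaY S (Suc l) x = rhaY S (Suc l) y"
    let ?p = "lexEnum (S (Suc l)) x" and ?q = "lexEnum (S (Suc l)) y"
    have px: "?p \<in> {1..k l} \<times> {1..k l}" "?q \<in> {1..k l} \<times> {1..k l}"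
      using lexEnum_in(2)[OF A x] lexEnum_in(2)[OF A y] by auto
    have "rhaY S l (fst ?p) @ rhaY S l (snd ?p) = rhaY S l (fst ?q) @ rhaY S l (snd ?q)"
      using e by (simp add: Let_def)
    hence "rhaY S l (fst ?p) = rhaY S l (fst ?q)" "rhaY S l (snd ?p) = rhaY S l (snd ?q)"
      by (simp_all add: append_eq_append_conv)
    hence "fst ?p = fst ?q" "snd ?p = snd ?q" using IH px by (auto dest: inj_onD)
    hence "?p = ?q" by (simp add: prod_eq_iff)
    thus "x = y" using bij x y by (auto simp: bij_betw_def dest: inj_onD)
  qed
qed

lemma set_JJ: "d \<le> n \<Longrightarrow> good k n S \<Longrightarrow> c \<in> {1..k n} \<Longrightarrow> set (JJ n S c d) \<subseteq> {1..k (n - d)}"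
proof (induction d)
  case 0 then show ?case by simp
next
  case (Suc d)
  have A: "S (n - d) \<in> Sb (k (n - Suc d)) (k (n - d))"
    using Suc.prems(2)[unfolded good_def, rule_format, of "n - d"] Suc.prems(1)
    by (simp add: Suc_diff_Suc[symmetric])
  show ?case using exps_props[OF A] Suc by simp
qed

lemma event_eq:
  assumes mn: "m \<le> n" and g: "good k n S" and c: "C n \<in> {1..k n}"
  shows "inj_on (rhaBlock S C m) {2 ^ (n - m) ..< 2 ^ (n - m + 1)} \<longleftrightarrow> distinct (JJ n S (C n) (n - m))"
proof -
  let ?a = "n - m"
  let ?J = "JJ n S (C n) ?a"
  have "map (rhaBlock S C m) [2 ^ ?a ..< 2 ^ (?a + 1)] = map (rhaY S m) ?J"
  proof (rule nth_equalityI)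
    show "length (map (rhaBlock S C m) [2 ^ ?a ..< 2 ^ (?a + 1)]) = length (map (rhaY S m) ?J)" by simp
    fix i assume "i < length (map (rhaBlock S C m) [2 ^ ?a ..< 2 ^ (?a + 1)])"
    hence i: "i < 2 ^ ?a" by simp
    show "map (rhaBlock S C m) [2 ^ ?a ..< 2 ^ (?a + 1)] ! i = map (rhaY S m) ?J ! i"
      using rhaBlock_eq[OF mn, of "2 ^ ?a + i" S C] i by simp
  qed
  moreover have "inj_on (rhaY S m) (set ?J)"
    using Y_inj[OF mn g] set_JJ[of ?a n k S "C n"] mn g c by (simp add: inj_on_subset)
  moreover have "inj_on (rhaBlock S C m) {2 ^ ?a ..< 2 ^ (?a + 1)} \<longleftrightarrow>
      distinct (map (rhaBlock S C m) [2 ^ ?a ..< 2 ^ (?a + 1)])"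
    by (simp add: distinct_map)
  ultimately show ?thesis
    by (simp add: distinct_map)
qed

lemma meas_comp2:
  fixes f :: "'w \<Rightarrow> 'a::countable" and g :: "'w \<Rightarrow> 'b"
  assumes f: "f \<in> measurable M (count_space UNIV)" and g: "g \<in> measurable M (count_space UNIV)"
  shows "(\<lambda>x. h (f x) (g x)) \<in> measurable M (count_space UNIV)"
proof (rule measurable_compose_countable[where g=f and f="\<lambda>i x. h i (g x)", OF _ f])
  fix i show "(\<lambda>x. h i (g x)) \<in> measurable M (count_space UNIV)"
    using measurable_compose[OF g measurable_count_space[of "h i" UNIV]] by (simp add: o_def)
qed

lemma meas_comp1:
  assumes g: "g \<in> measurable M (count_space UNIV)"
  shows "(\<lambda>x. h (g x)) \<in> measurable M (count_space UNIV)"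
  using measurable_compose[OF g measurable_count_space[of h UNIV]] by (simp add: o_def)

lemma meas_Y:
  assumes S: "\<And>l. l \<ge> 1 \<Longrightarrow> S l \<in> measurable M (count_space UNIV)"
    and g: "g \<in> measurable M (count_space UNIV)"
  shows "(\<lambda>\<omega>. rhaY (\<lambda>i. S i \<omega>) l (g \<omega>)) \<in> measurable M (count_space UNIV)"
  using g
proof (induction l arbitrary: g)
  case 0
  then show ?case by (simp add: meas_comp1)
next
  case (Suc l)
  let ?h = "\<lambda>\<omega>. lexEnum (S (Suc l) \<omega>) (g \<omega>)"
  have h: "?h \<in> measurable M (count_space UNIV)"
    using meas_comp2[OF Suc.prems S[of "Suc l"], of "\<lambda>j A. lexEnum A j"] by simp
  have a: "(\<lambda>\<omega>. rhaY (\<lambda>i. S i \<omega>) l (fst (?h \<omega>))) \<in> measurable M (count_space UNIV)"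
    by (rule Suc.IH) (rule meas_comp1[OF h])
  have b: "(\<lambda>\<omega>. rhaY (\<lambda>i. S i \<omega>) l (snd (?h \<omega>))) \<in> measurable M (count_space UNIV)"
    by (rule Suc.IH) (rule meas_comp1[OF h])
  show ?case using meas_comp2[OF a b, of "(@)"] by (simp add: Let_def)
qed

lemma meas_list:
  fixes F :: "'t \<Rightarrow> 'w \<Rightarrow> 'a::countable"
  assumes "\<And>t. F t \<in> measurable M (count_space UNIV)"
  shows "(\<lambda>\<omega>. map (\<lambda>t. F t \<omega>) ts) \<in> measurable M (count_space UNIV)"
proof (induction ts)
  case Nil then show ?case by simp
next
  case (Cons t ts)
  show ?case using meas_comp2[OF assms[of t] Cons, of "(#)"] by simp
qed

lemma meas_A:
  assumes S: "\<And>l. l \<ge> 1 \<Longrightarrow> S l \<in> measurable M (count_space UNIV)"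
    and C: "\<And>l. C l \<in> measurable M (count_space UNIV)"
  shows "rhaA (space M) S C n m \<in> sets M"
proof -
  have X: "\<And>t. (\<lambda>\<omega>. rhaX (\<lambda>i. S i \<omega>) (\<lambda>i. C i \<omega>) t) \<in> measurable M (count_space UNIV)"
    unfolding rhaX_def by (rule meas_comp1[OF meas_Y[OF S C]])
  have B: "\<And>j. (\<lambda>\<omega>. rhaBlock (\<lambda>i. S i \<omega>) (\<lambda>i. C i \<omega>) m j) \<in> measurable M (count_space UNIV)"
    unfolding rhaBlock_def by (rule meas_list[OF X])
  have W: "(\<lambda>\<omega>. map (\<lambda>j. rhaBlock (\<lambda>i. S i \<omega>) (\<lambda>i. C i \<omega>) m j) [2 ^ (n - m) ..< 2 ^ (n - m + 1)])
      \<in> measurable M (count_space UNIV)"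
    by (rule meas_list[OF B])
  have "rhaA (space M) S C n m = (\<lambda>\<omega>. map (\<lambda>j. rhaBlock (\<lambda>i. S i \<omega>) (\<lambda>i. C i \<omega>) m j) [2 ^ (n - m) ..< 2 ^ (n - m + 1)]) -` {xs. distinct xs} \<inter> space M"
    unfolding rhaA_def by (auto simp: distinct_map)
  thus ?thesis using measurable_sets[OF W, of "{xs. distinct xs}"] by simp
qed

definition Gs :: "nat \<Rightarrow> (nat \<Rightarrow> nat) \<Rightarrow> ((nat \<Rightarrow> (nat \<times> nat) set) \<times> nat) set" where
  "Gs n k = {(f, c). (\<forall>l\<in>{1..n}. f l \<in> Sb (k (l - 1)) (k l)) \<and> (\<forall>l. l \<notin> {1..n} \<longrightarrow> f l = {}) \<and> c \<in> {1..k n}}"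

lemma finite_Gs: "finite (Gs n k)"
proof -
  have "Gs n k = PiE_dflt {1..n} {} (\<lambda>l. Sb (k (l - 1)) (k l)) \<times> {1..k n}"
    by (auto simp: Gs_def PiE_dflt_def)
  thus ?thesis using finite_PiE_dflt[of "{1..n}" "\<lambda>l. Sb (k (l - 1)) (k l)"] finite_Sb by auto
qed

context
  fixes n :: nat and k :: "nat \<Rightarrow> nat"
  assumes k_pos: "\<And>l. k l > 0"
    and k_sq: "\<And>l. l \<ge> 1 \<Longrightarrow> k l \<le> k (l - 1) ^ 2"
begin

lemma QQ_eq: "QQ n k = pair_pmf (Pi_pmf {1..n} {} (PP k)) (pmf_of_set {1..k n})"
  using k_pos k_sq by (rule QQ_def)

lemma PP_eq: "PP k l = pmf_of_set (Sb (k (l - 1)) (k l))"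
  using k_pos k_sq by (rule PP_def)

lemma DD_eq: "DD n k d = map_pmf (\<lambda>(f, c). JJ n f c d) (QQ n k)"
  using k_pos k_sq by (rule DD_def)

lemma set_PP': assumes "1 \<le> l" shows "set_pmf (PP k l) = Sb (k (l - 1)) (k l)"
  using k_pos k_sq assms by (rule set_PP)

lemma prob_distinct': assumes "d \<le> n" shows "measure_pmf.prob (DD n k d) {J. distinct J} = bb n k d * ff (k (n - d)) (2 ^ d)"
  using k_pos k_sq assms by (rule prob_distinct)

lemma set_QQ: "set_pmf (QQ n k) = Gs n k"
proof -
  have ne: "{1..k n} \<noteq> {}" using k_pos[of n] by simp
  have "set_pmf (Pi_pmf {1..n} {} (PP k)) = PiE_dflt {1..n} {} (set_pmf \<circ> PP k)"
    by (rule set_Pi_pmf) simp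
  also have "\<dots> = PiE_dflt {1..n} {} (\<lambda>l. Sb (k (l - 1)) (k l))"
  proof -
    have "\<And>l. l \<in> {1..n} \<Longrightarrow> (set_pmf \<circ> PP k) l = Sb (k (l - 1)) (k l)"
      using set_PP' by simp
    thus ?thesis unfolding PiE_dflt_def by blast
  qed
  finally have "set_pmf (Pi_pmf {1..n} {} (PP k)) = PiE_dflt {1..n} {} (\<lambda>l. Sb (k (l - 1)) (k l))" .
  moreover have "set_pmf (pmf_of_set {1..k n}) = {1..k n}" using ne by simp
  ultimately have "set_pmf (QQ n k) = PiE_dflt {1..n} {} (\<lambda>l. Sb (k (l - 1)) (k l)) \<times> {1..k n}"
    unfolding QQ_eq by simp
  also have "\<dots> = Gs n k" unfolding Gs_def PiE_dflt_def by blast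
  finally show ?thesis .
qed

lemma pmf_QQ: "(f, c) \<in> Gs n k \<Longrightarrow> pmf (QQ n k) (f, c) = (\<Prod>l\<in>{1..n}. pmf (PP k l) (f l)) * pmf (pmf_of_set {1..k n}) c"
  unfolding QQ_eq by (simp add: pmf_pair pmf_Pi Gs_def)

context
  fixes M :: "'w measure" and S :: "nat \<Rightarrow> 'w \<Rightarrow> (nat \<times> nat) set"
    and C :: "nat \<Rightarrow> 'w \<Rightarrow> nat"
  assumes ps: "prob_space M"
    and S_meas: "\<And>n. n \<ge> 1 \<Longrightarrow> S n \<in> measurable M (count_space UNIV)"
    and S_unif: "\<And>n. n \<ge> 1 \<Longrightarrow> distr M (count_space UNIV) (S n) =
        measure_pmf (pmf_of_set {A. A \<subseteq> {1..k (n - 1)} \<times> {1..k (n - 1)} \<and> card A = k n})"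
    and C_meas: "\<And>n. C n \<in> measurable M (count_space UNIV)"
    and C_unif: "\<And>n. distr M (count_space UNIV) (C n) = measure_pmf (pmf_of_set {1..k n})"
    and indep: "prob_space.indep_vars M (\<lambda>_. count_space UNIV) (rhaVars S C)
        (Inl ` {1..} \<union> range Inr)"
begin

definition VV :: "'w \<Rightarrow> (nat \<Rightarrow> (nat \<times> nat) set) \<times> nat" where
  "VV \<omega> = ((\<lambda>i. if i \<in> {1..n} then S i \<omega> else {}), C n \<omega>)"

lemma prob_S: "l \<ge> 1 \<Longrightarrow> measure M (S l -` {A} \<inter> space M) = pmf (PP k l) A"
proof -
  assume l: "l \<ge> 1"
  have "measure M (S l -` {A} \<inter> space M) = measure (distr M (count_space UNIV) (S l)) {A}"
    by (rule measure_distr[symmetric]) (use S_meas l in auto)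
  also have "\<dots> = pmf (PP k l) A"
    unfolding S_unif[OF l] PP_eq Sb_def by (simp add: measure_pmf_single)
  finally show ?thesis .
qed

lemma prob_C: "measure M (C n -` {c} \<inter> space M) = pmf (pmf_of_set {1..k n}) c"
proof -
  have "measure M (C n -` {c} \<inter> space M) = measure (distr M (count_space UNIV) (C n)) {c}"
    by (rule measure_distr[symmetric]) (use C_meas in auto)
  also have "\<dots> = pmf (pmf_of_set {1..k n}) c"
    unfolding C_unif by (simp add: measure_pmf_single)
  finally show ?thesis .
qed

lemma VV_point:
  assumes v: "(f, c) \<in> Gs n k"
  shows "{\<omega> \<in> space M. VV \<omega> = (f, c)} \<in> sets M \<and> measure M {\<omega> \<in> space M. VV \<omega> = (f, c)} = pmf (QQ n k) (f, c)"
proof -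
  interpret P: prob_space M by (rule ps)
  define I where "I = Inl ` {1..n} \<union> {Inr n :: nat + nat}"
  define B where "B = (\<lambda>i::nat + nat. case i of Inl l \<Rightarrow> {Inl (f l)} | Inr _ \<Rightarrow> {Inr c :: (nat \<times> nat) set + nat})"
  have rv: "\<And>i. i \<in> Inl ` {1..} \<union> range Inr \<Longrightarrow> rhaVars S C i \<in> measurable M (count_space UNIV)"
    using indep unfolding P.indep_vars_def by blast
  have IJ: "I \<subseteq> Inl ` {1..} \<union> range Inr" unfolding I_def by auto
  have fI: "finite I" "I \<noteq> {}" unfolding I_def by auto
  have pre_l: "\<And>l. rhaVars S C (Inl l) -` {Inl (f l)} = S l -` {f l}"
    by (auto simp: rhaVars_def)
  have pre_r: "rhaVars S C (Inr n) -` {Inr c} = C n -` {c}"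
    by (auto simp: rhaVars_def)
  have eq: "{\<omega> \<in> space M. VV \<omega> = (f, c)} = (\<Inter>i\<in>I. rhaVars S C i -` B i \<inter> space M)"
  proof -
    have "\<And>\<omega>. (\<lambda>i. if i \<in> {1..n} then S i \<omega> else {}) = f \<longleftrightarrow> (\<forall>l\<in>{1..n}. S l \<omega> = f l)"
      using v by (auto simp: Gs_def fun_eq_iff)
    thus ?thesis unfolding VV_def I_def B_def by (auto simp: pre_l pre_r)
  qed
  have meas: "(\<Inter>i\<in>I. rhaVars S C i -` B i \<inter> space M) \<in> sets M"
    using fI IJ rv by (intro sets.finite_INT) (auto intro!: measurable_sets)
  have "P.prob (\<Inter>i\<in>I. rhaVars S C i -` B i \<inter> space M) = (\<Prod>i\<in>I. P.prob (rhaVars S C i -` B i \<inter> space M))"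
    by (rule P.indep_varsD[OF indep fI(2) fI(1) IJ]) simp
  also have "\<dots> = (\<Prod>i\<in>Inl ` {1..n}. P.prob (rhaVars S C i -` B i \<inter> space M)) * P.prob (rhaVars S C (Inr n) -` B (Inr n) \<inter> space M)"
    unfolding I_def by (subst prod.union_disjoint) auto
  also have "(\<Prod>i\<in>Inl ` {1..n}. P.prob (rhaVars S C i -` B i \<inter> space M)) = (\<Prod>l\<in>{1..n}. P.prob (S l -` {f l} \<inter> space M))"
    by (subst prod.reindex) (auto simp: inj_on_def B_def pre_l)
  also have "\<dots> = (\<Prod>l\<in>{1..n}. pmf (PP k l) (f l))"
    by (rule prod.cong) (auto simp: prob_S)
  also have "P.prob (rhaVars S C (Inr n) -` B (Inr n) \<inter> space M) = pmf (pmf_of_set {1..k n}) c"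
    by (simp add: B_def pre_r prob_C)
  finally show ?thesis using eq meas pmf_QQ[OF v] by simp
qed

lemma transfer:
  "{\<omega> \<in> space M. VV \<omega> \<in> Gs n k \<inter> E} \<in> sets M \<and>
   measure M {\<omega> \<in> space M. VV \<omega> \<in> Gs n k \<inter> E} = measure_pmf.prob (QQ n k) E"
proof -
  interpret P: prob_space M by (rule ps)
  have fin: "finite (Gs n k \<inter> E)" using finite_Gs by simp
  have U: "{\<omega> \<in> space M. VV \<omega> \<in> Gs n k \<inter> E} = (\<Union>v\<in>Gs n k \<inter> E. {\<omega> \<in> space M. VV \<omega> = v})"
    by auto
  have pts: "\<And>v. v \<in> Gs n k \<Longrightarrow> {\<omega> \<in> space M. VV \<omega> = v} \<in> sets M \<and> measure M {\<omega> \<in> space M. VV \<omega> = v} = pmf (QQ n k) v"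
  proof -
    fix v assume v: "v \<in> Gs n k"
    obtain f c where fc: "v = (f, c)" by (cases v)
    show "{\<omega> \<in> space M. VV \<omega> = v} \<in> sets M \<and> measure M {\<omega> \<in> space M. VV \<omega> = v} = pmf (QQ n k) v"
      using VV_point[of f c] v unfolding fc by blast
  qed
  have m: "{\<omega> \<in> space M. VV \<omega> \<in> Gs n k \<inter> E} \<in> sets M"
    unfolding U using fin pts by (intro sets.finite_UN) auto
  have "measure M {\<omega> \<in> space M. VV \<omega> \<in> Gs n k \<inter> E} = (\<Sum>v\<in>Gs n k \<inter> E. measure M {\<omega> \<in> space M. VV \<omega> = v})"
    unfolding U
  proof (rule measure_finite_Union[OF fin])
    show "(\<lambda>v. {\<omega> \<in> space M. VV \<omega> = v}) ` (Gs n k \<inter> E) \<subseteq> sets M" using pts by auto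
    show "disjoint_family_on (\<lambda>v. {\<omega> \<in> space M. VV \<omega> = v}) (Gs n k \<inter> E)"
      by (auto simp: disjoint_family_on_def)
    show "\<And>v. emeasure M {\<omega> \<in> space M. VV \<omega> = v} \<noteq> \<infinity>"
      using P.emeasure_finite by simp
  qed
  also have "\<dots> = (\<Sum>v\<in>Gs n k \<inter> E. pmf (QQ n k) v)"
    using pts by (intro sum.cong) auto
  also have "\<dots> = measure_pmf.prob (QQ n k) (Gs n k \<inter> E)"
    by (rule measure_measure_pmf_finite[symmetric, OF fin])
  also have "\<dots> = measure_pmf.prob (QQ n k) E"
    using measure_Int_set_pmf[of "QQ n k" E] set_QQ by (simp add: Int_commute)
  finally show ?thesis using m by simp
qed

lemma good_VV:
  assumes "\<omega> \<in> space M" "VV \<omega> \<in> Gs n k"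
  shows "good k n (\<lambda>i. S i \<omega>)" "C n \<omega> \<in> {1..k n}"
  using assms by (auto simp: VV_def Gs_def good_def)

lemma prob_A:
  assumes mn: "m \<le> n"
  shows "measure M (rhaA (space M) S C n m) = bb n k (n - m) * ff (k m) (2 ^ (n - m))"
proof -
  interpret P: prob_space M by (rule ps)
  let ?G = "{\<omega> \<in> space M. VV \<omega> \<in> Gs n k \<inter> UNIV}"
  let ?E = "{(f, c). distinct (JJ n f c (n - m))}"
  have A: "rhaA (space M) S C n m \<in> sets M" by (rule meas_A[OF S_meas C_meas])
  have G: "?G \<in> sets M" "P.prob ?G = 1"
    using transfer[of UNIV] by auto
  have null: "space M - ?G \<in> null_sets M"
  proof -
    have "P.prob (space M - ?G) = 0" using G P.prob_compl by simp
    thus ?thesis using G by (simp add: P.emeasure_eq_measure null_sets_def sets.compl_sets)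
  qed
  have "P.prob (rhaA (space M) S C n m) = P.prob (rhaA (space M) S C n m - (space M - ?G))"
    by (rule measure_Diff_null_set[symmetric, OF A null])
  also have "rhaA (space M) S C n m - (space M - ?G) = {\<omega> \<in> space M. VV \<omega> \<in> Gs n k \<inter> ?E}"
  proof (intro equalityI subsetI)
    fix \<omega> assume w: "\<omega> \<in> rhaA (space M) S C n m - (space M - ?G)"
    hence w1: "\<omega> \<in> space M" "VV \<omega> \<in> Gs n k" by (auto simp: rhaA_def)
    have JJe: "JJ n (\<lambda>i. if i \<in> {1..n} then S i \<omega> else {}) (C n \<omega>) (n - m) = JJ n (\<lambda>i. S i \<omega>) (C n \<omega>) (n - m)"
      by (rule JJ_cong) (use mn in auto)
    have "distinct (JJ n (\<lambda>i. S i \<omega>) (C n \<omega>) (n - m))"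
      using w event_eq[where S="\<lambda>i. S i \<omega>" and C="\<lambda>i. C i \<omega>", OF mn good_VV[OF w1]] by (auto simp: rhaA_def)
    thus "\<omega> \<in> {\<omega> \<in> space M. VV \<omega> \<in> Gs n k \<inter> ?E}" using w1 JJe by (simp add: VV_def)
  next
    fix \<omega> assume w: "\<omega> \<in> {\<omega> \<in> space M. VV \<omega> \<in> Gs n k \<inter> ?E}"
    hence w1: "\<omega> \<in> space M" "VV \<omega> \<in> Gs n k" by auto
    have JJe: "JJ n (\<lambda>i. if i \<in> {1..n} then S i \<omega> else {}) (C n \<omega>) (n - m) = JJ n (\<lambda>i. S i \<omega>) (C n \<omega>) (n - m)"
      by (rule JJ_cong) (use mn in auto)
    have "distinct (JJ n (\<lambda>i. S i \<omega>) (C n \<omega>) (n - m))" using w JJe by (simp add: VV_def)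
    thus "\<omega> \<in> rhaA (space M) S C n m - (space M - ?G)"
      using w1 event_eq[where S="\<lambda>i. S i \<omega>" and C="\<lambda>i. C i \<omega>", OF mn good_VV[OF w1]] by (auto simp: rhaA_def)
  qed
  also have "P.prob {\<omega> \<in> space M. VV \<omega> \<in> Gs n k \<inter> ?E} = measure_pmf.prob (QQ n k) ?E"
    using transfer by blast
  also have "\<dots> = measure_pmf.prob (DD n k (n - m)) {J. distinct J}"
    unfolding DD_eq measure_map_pmf by (intro arg_cong[where f="measure_pmf.prob (QQ n k)"]) auto
  also have "\<dots> = bb n k (n - m) * ff (k (n - (n - m))) (2 ^ (n - m))"
    by (rule prob_distinct') simp
  finally show ?thesis using mn by simp
qed

end

end

theorem proposition5:
  fixes M :: "'w measure"
    and k :: "nat \<Rightarrow> nat"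
    and S :: "nat \<Rightarrow> 'w \<Rightarrow> (nat \<times> nat) set"
    and C :: "nat \<Rightarrow> 'w \<Rightarrow> nat"
    and m n :: nat
  assumes "prob_space M"
    and k_pos: "\<And>n. k n > 0"
    and k_mono: "\<And>n. n \<ge> 1 \<Longrightarrow> k (n - 1) \<le> k n \<and> k n \<le> k (n - 1) ^ 2"
    and S_meas: "\<And>n. n \<ge> 1 \<Longrightarrow> S n \<in> measurable M (count_space UNIV)"
    and S_unif: "\<And>n. n \<ge> 1 \<Longrightarrow> distr M (count_space UNIV) (S n) =
        measure_pmf (pmf_of_set {A. A \<subseteq> {1..k (n - 1)} \<times> {1..k (n - 1)} \<and> card A = k n})"
    and C_meas: "\<And>n. C n \<in> measurable M (count_space UNIV)"
    and C_unif: "\<And>n. distr M (count_space UNIV) (C n) = measure_pmf (pmf_of_set {1..k n})"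
    and indep: "prob_space.indep_vars M (\<lambda>_. count_space UNIV) (rhaVars S C)
        (Inl ` {1..} \<union> range Inr)"
    and "m \<le> n"
  shows "(k m < 2 ^ (n - m) \<longrightarrow> measure M (rhaA (space M) S C n m) = 0)
       \<and> (2 ^ (n - m) \<le> k m \<and> m < n \<longrightarrow>
            measure M (rhaA (space M) S C n m) =
              measure M (rhaA (space M) S C n (m + 1)) *
              ((\<Prod>i<2 ^ (n - m). real (k m) - real i) /
               (\<Prod>i<2 ^ (n - m - 1). real (k m) ^ 2 - real i)))"
proof -
  have ksq: "\<And>l. 1 \<le> l \<Longrightarrow> k l \<le> k (l - 1) ^ 2" using k_mono by blast
  have PA: "measure M (rhaA (space M) S C n m') = bb n k (n - m') * ff (k m') (2 ^ (n - m'))"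
    if "m' \<le> n" for m'
    using k_pos ksq assms(1) S_meas S_unif C_meas C_unif indep that by (rule prob_A)
  show ?thesis
  proof (intro conjI impI)
    assume "k m < 2 ^ (n - m)"
    thus "measure M (rhaA (space M) S C n m) = 0" using PA[OF assms(9)] by (simp add: ff_zero)
  next
    assume a: "2 ^ (n - m) \<le> k m \<and> m < n"
    define d where "d = n - m - 1"
    have d1: "n - m = Suc d" "n - d = Suc m" "n - Suc d = m" "n - Suc m = d" using a by (auto simp: d_def)
    have e1: "measure M (rhaA (space M) S C n m) = bb n k (Suc d) * ff (k m) (2 ^ Suc d)"
      using PA[of m] a d1 by simp
    have e2: "measure M (rhaA (space M) S C n (m + 1)) = bb n k d * ff (k (Suc m)) (2 ^ d)"
      using PA[of "m + 1"] a d1 by simp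
    have p1: "(\<Prod>i<2 ^ (n - m). real (k m) - real i) = ff (k m) (2 ^ Suc d)"
      unfolding ff_def d1 ..
    have p2: "(\<Prod>i<2 ^ (n - m - 1). real (k m) ^ 2 - real i) = ff (k m ^ 2) (2 ^ d)"
      unfolding ff_def d_def by simp
    show "measure M (rhaA (space M) S C n m) =
              measure M (rhaA (space M) S C n (m + 1)) *
              ((\<Prod>i<2 ^ (n - m). real (k m) - real i) /
               (\<Prod>i<2 ^ (n - m - 1). real (k m) ^ 2 - real i))"
    proof -
      have bbS: "bb n k (Suc d) = bb n k d * (ff (k (n - d)) (2 ^ d) / ff (k (n - Suc d) ^ 2) (2 ^ d))"
        using k_pos ksq by (rule bb.simps(2))
      show ?thesis unfolding e1 e2 p1 p2 bbS d1 by (simp add: ff_def)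
    qed
  qed
qed

end
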